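(* Let $m \in \mathbb{F}_2[t]$ be odd with $\deg m = d$, and let $N \ge 1$. The map $\Phi_m : \mathbb{F}_2[t]/(t^N) \to \{0,1\}^N$ sending the class of $f$ to the first $N$ terms $(p_0,\dots,p_{N-1})$ of the parity sequence of $f$ is well defined and is a bijection. Moreover, for each $(p_0,\dots,p_{N-1}) \in \{0,1\}^N$, with $s(N) = \sum_{i=0}^{N-1} p_i$, there exist $g_{N-1}, h_{N-1} \in \mathbb{F}_2[t]$ with $\deg g_{N-1} < N$ and $\deg h_{N-1} < d\, s(N)$ such that the polynomials whose parity sequence begins with $(p_0,\dots,p_{N-1})$ are exactly those of the form $f = g_{N-1} + t^N q$ with $q \in \mathbb{F}_2[t]$, and for every such $f$ one has $T^N(f) = h_{N-1} + m^{s(N)} q$. In particular, the first $N$ parity terms of a uniformly random polynomial of degree $< N$ are uniformly distributed on $\{0,1\}^N$.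
   Context: A polynomial $m \in \mathbb{F}_2[t]$ is called odd if $m(0) = 1$. For a fixed odd $m$, the $mx+1$ map $T:\mathbb{F}_2[t]\to\mathbb{F}_2[t]$ is $T(f) = f/t$ if $f \equiv 0 \pmod t$ and $T(f) = (mf+1)/t$ if $f \not\equiv 0 \pmod t$. Degrees are in $t$, with $\deg 0 = -\infty$. The parity sequence of $f$ is $(p_0, p_1, p_2, \dots)$ where $p_k = T^k(f)(0) \in \{0,1\}$ is the constant term of $T^k(f)$. *)

theory Defs
  imports "HOL-Library.Z2" "HOL-Computational_Algebra.Polynomial" "HOL-Probability.Probability"
begin

definition odd_poly :: "bit poly \<Rightarrow> bool" where
  "odd_poly m \<longleftrightarrow> coeff m 0 = 1"

definition mxT :: "bit poly \<Rightarrow> bit poly \<Rightarrow> bit poly" where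
  "mxT m f = (if coeff f 0 = 0 then f div [:0, 1:] else (m * f + 1) div [:0, 1:])"

definition parity_term :: "bit poly \<Rightarrow> bit poly \<Rightarrow> nat \<Rightarrow> bit" where
  "parity_term m f k = coeff ((mxT m ^^ k) f) 0"

definition parity_prefix :: "bit poly \<Rightarrow> nat \<Rightarrow> bit poly \<Rightarrow> bit list" where
  "parity_prefix m N f = map (parity_term m f) [0..<N]"

definition ones_count :: "bit list \<Rightarrow> nat" where
  "ones_count ps = sum_list (map (\<lambda>b. if b = 1 then 1 else 0) ps)"

end

theory Submission
  imports Defs
begin

abbreviation tt :: "bit poly" where "tt \<equiv> [:0, 1:]"

definition lowdeg :: "bit poly \<Rightarrow> nat \<Rightarrow> bool" where
  "lowdeg p n \<longleftrightarrow> (\<forall>i\<ge>n. coeff p i = 0)"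

lemma lowdeg_iff: "lowdeg p n \<longleftrightarrow> p = 0 \<or> degree p < n"
  unfolding lowdeg_def
  by (metis coeff_0 coeff_eq_0 le_less_trans leading_coeff_0_iff not_le)

lemma lowdeg_degree: "degree p \<le> k \<Longrightarrow> lowdeg p (Suc k)"
  by (simp add: lowdeg_iff)

lemma lowdeg_degree': "lowdeg p (Suc k) \<Longrightarrow> degree p \<le> k"
  by (auto simp add: lowdeg_iff)

lemma tt_mult: "tt * y = pCons 0 y"
  by simp

lemma coeff0_split: "coeff x 0 = 0 \<Longrightarrow> \<exists>y. x = tt * y"
proof -
  assume "coeff x 0 = 0"
  then have "poly x (- 0) = 0" by (simp add: poly_0_coeff_0)
  then have "tt dvd x" using dvd_iff_poly_eq_0[of 0 x] by simp
  then show ?thesis by (auto elim: dvdE)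
qed

lemma div_tt: "(tt * y) div tt = y"
  by (rule nonzero_mult_div_cancel_left) simp

lemma div_pc[simp]: "pCons 0 y div tt = y"
  using div_tt[of y] by simp

lemma bit_add_self: "(a::bit) + a = 0"
  by (cases a) simp_all

lemma mxT_step0:
  assumes y: "x = tt * y"
  shows "mxT m (x + tt * z) = y + z"
proof -
  have "x + tt * z = tt * (y + z)" using y by (simp only: distrib_left)
  moreover have "coeff (tt * (y + z)) 0 = 0" by simp
  ultimately show ?thesis by (simp add: mxT_def div_tt)
qed

lemma mxT_step1:
  assumes "coeff x 0 = 1" and y: "m * x + 1 = tt * y"
  shows "mxT m (x + tt * z) = y + m * z"
proof -
  have "m * (x + tt * z) + 1 = (m * x + 1) + tt * (m * z)" by (simp add: algebra_simps)
  also have "\<dots> = tt * (y + m * z)" by (simp only: y distrib_left)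
  finally have "m * (x + tt * z) + 1 = tt * (y + m * z)" .
  moreover have "coeff (x + tt * z) 0 = 1" using assms by simp
  ultimately show ?thesis by (simp add: mxT_def div_tt)
qed

lemma odd_c: "odd_poly m \<Longrightarrow> coeff x 0 = 1 \<Longrightarrow> coeff (m * x + 1) 0 = 0"
  by (simp add: odd_poly_def coeff_mult_0 bit_add_self)

lemma funpow_Suc': "(f ^^ Suc n) x = f ((f ^^ n) x)"
  by simp

lemma ttn_monom: "tt^n * [:c:] = monom c n" by (simp add: monom_altdef)

lemma coeff_ttn: "i \<noteq> n \<Longrightarrow> coeff (tt^n * [:c:]) i = 0"
  by (subst ttn_monom) (simp add: coeff_monom)

lemma split_D: "f = g + tt ^ n * q \<Longrightarrow> q = [:c:] + tt * q' \<Longrightarrow> f = (g + tt ^ n * [:c:]) + tt ^ Suc n * q'"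
  by (simp add: algebra_simps)

lemma prefix_Suc: "parity_prefix m (Suc n) f = parity_prefix m n f @ [parity_term m f n]"
  by (simp add: parity_prefix_def)

lemma ones_count_snoc: "ones_count (ps @ [b]) = ones_count ps + (if b = 1 then 1 else 0)"
  by (simp add: ones_count_def)

lemma q_split: "q = [:coeff q 0:] + tt * synthetic_div q 0"
  using synthetic_div_correct'[of 0 q] by (simp add: poly_0_coeff_0 algebra_simps)

lemma lowdeg_shift: "x = tt * y \<Longrightarrow> lowdeg x (Suc k) \<Longrightarrow> lowdeg y k"
  unfolding lowdeg_def by (metis Suc_le_mono coeff_pCons_Suc tt_mult)

lemma main:
  assumes m: "odd_poly m"
  shows "length ps = N \<Longrightarrow> \<exists>g h. lowdeg g N \<and> lowdeg h (degree m * ones_count ps)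
     \<and> (\<forall>f. parity_prefix m N f = ps \<longleftrightarrow> (\<exists>q. f = g + tt ^ N * q))
     \<and> (\<forall>q. (mxT m ^^ N) (g + tt ^ N * q) = h + m ^ ones_count ps * q)"
proof (induction ps arbitrary: N rule: rev_induct)
  case Nil
  then show ?case
    by (intro exI[of _ 0]) (auto simp: lowdeg_def parity_prefix_def ones_count_def)
next
  case (snoc b ps)
  then obtain n where N: "N = Suc n" and n: "length ps = n" by auto
  obtain g h where g: "lowdeg g n" and h: "lowdeg h (degree m * ones_count ps)"
    and pf: "\<forall>f. parity_prefix m n f = ps \<longleftrightarrow> (\<exists>q. f = g + tt ^ n * q)"
    and it: "\<forall>q. (mxT m ^^ n) (g + tt ^ n * q) = h + m ^ ones_count ps * q"
    using snoc.IH[OF n] by blast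
  define s where "s = ones_count ps"
  define d where "d = degree m"
  define c where "c = b + coeff h 0"
  define g' where "g' = g + tt ^ n * [:c:]"
  define x where "x = h + m ^ s * [:c:]"
  have m0: "coeff m 0 = 1" using m by (simp add: odd_poly_def)
  have x0: "coeff x 0 = b"
    by (simp add: x_def c_def coeff_mult_0 coeff_0_power m0) (cases b; cases "coeff h 0"; simp)
  have degms: "degree (m ^ s * [:c:]) \<le> d * s"
    by (metis d_def degree_mult_le degree_pCons_0 degree_power_le add_0_right order_trans
        mult.commute)
  have xlow: "lowdeg x (Suc (d * s))"
    unfolding x_def lowdeg_def
  proof (intro allI impI)
    fix i assume i: "Suc (d * s) \<le> i"
    have "coeff h i = 0" using h i unfolding lowdeg_def s_def d_def by auto
    moreover have "coeff (m ^ s * [:c:]) i = 0" using degms i by (intro coeff_eq_0) auto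
    ultimately show "coeff (h + m ^ s * [:c:]) i = 0" by simp
  qed
  have gen: "(mxT m ^^ N) (g' + tt ^ N * q) = mxT m (x + tt * (m ^ s * q))" for q
  proof -
    have "g' + tt ^ N * q = g + tt ^ n * ([:c:] + tt * q)"
      by (simp add: g'_def N algebra_simps)
    then have "(mxT m ^^ N) (g' + tt ^ N * q) = mxT m ((mxT m ^^ n) (g + tt ^ n * ([:c:] + tt * q)))"
      unfolding N by (simp only: funpow_Suc')
    also have "\<dots> = mxT m (h + m ^ s * ([:c:] + tt * q))"
      using it by (simp only: s_def)
    also have "h + m ^ s * ([:c:] + tt * q) = x + tt * (m ^ s * q)"
      by (simp add: x_def algebra_simps)
    finally show ?thesis .
  qed
  have g'low: "lowdeg g' N"
    unfolding lowdeg_def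
  proof (intro allI impI)
    fix i assume i: "N \<le> i"
    have "coeff g i = 0" using g i N unfolding lowdeg_def by auto
    moreover have "coeff (tt ^ n * [:c:]) i = 0" using i N by (intro coeff_ttn) auto
    ultimately show "coeff g' i = 0" by (simp add: g'_def)
  qed
  have pf': "parity_prefix m N f = ps @ [b] \<longleftrightarrow> (\<exists>q. f = g' + tt ^ N * q)" for f
  proof
    assume A: "parity_prefix m N f = ps @ [b]"
    then have "parity_prefix m n f = ps" and pb: "parity_term m f n = b"
      by (simp_all add: N prefix_Suc)
    then obtain q where q: "f = g + tt ^ n * q" using pf by blast
    have "parity_term m f n = coeff h 0 + coeff q 0"
      using it q by (simp add: parity_term_def coeff_mult_0 coeff_0_power m0 s_def)
    then have "coeff q 0 = c" using pb unfolding c_def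
      by (cases b; cases "coeff h 0"; cases "coeff q 0"; simp)
    then have "q = [:c:] + tt * synthetic_div q 0" using q_split[of q] by simp
    then have "f = g' + tt ^ N * synthetic_div q 0"
      using q unfolding g'_def N by (rule_tac split_D)
    then show "\<exists>q. f = g' + tt ^ N * q" by blast
  next
    assume "\<exists>q. f = g' + tt ^ N * q"
    then obtain q where q: "f = g' + tt ^ N * q" by blast
    have "f = g + tt ^ n * ([:c:] + tt * q)"
      using q by (simp add: g'_def N algebra_simps)
    then have p1: "parity_prefix m n f = ps" using pf by blast
    have e: "(mxT m ^^ n) f = h + m ^ s * ([:c:] + tt * q)"
      unfolding \<open>f = g + tt ^ n * ([:c:] + tt * q)\<close> s_def using it by blast
    have "parity_term m f n = coeff h 0 + c"
      unfolding parity_term_def e by (simp add: coeff_mult_0 coeff_0_power m0)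
    then have "parity_term m f n = b" unfolding c_def
      by (cases b; cases "coeff h 0"; simp)
    then show "parity_prefix m N f = ps @ [b]" using p1 by (simp add: N prefix_Suc)
  qed
  show ?case
  proof (cases "b = 1")
    case True
    have x1: "coeff x 0 = 1" using x0 True by simp
    obtain y where y: "m * x + 1 = tt * y" using coeff0_split[OF odd_c[OF m x1]] by blast
    note st = mxT_step1[OF x1 y]
    have oc: "ones_count (ps @ [b]) = Suc s" using True by (simp add: ones_count_snoc s_def)
    have dmx: "degree (m * x) \<le> d + d * s"
      using degree_mult_le[of m x] lowdeg_degree'[OF xlow] d_def by linarith
    have "degree (m * x + 1) \<le> max (degree (m * x)) (degree (1::bit poly))"
      by (rule degree_add_le_max)
    then have "degree (m * x + 1) \<le> d * Suc s" using dmx by simp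
    then have "lowdeg (m * x + 1) (Suc (d * Suc s))" by (rule lowdeg_degree)
    then have ylow: "lowdeg y (d * Suc s)" using lowdeg_shift[OF y] by blast
    show ?thesis
      apply (rule exI[of _ g'], rule exI[of _ y])
      apply (intro conjI allI)
         apply (rule g'low)
        apply (unfold oc d_def[symmetric], rule ylow)
       apply (rule pf')
      apply (simp only: gen st power_Suc mult.assoc)
      done
  next
    case False
    then have b0: "b = 0" by simp
    have x1: "coeff x 0 = 0" using x0 b0 by simp
    obtain y where y: "x = tt * y" using coeff0_split[OF x1] by blast
    note st = mxT_step0[OF y]
    have oc: "ones_count (ps @ [b]) = s" using b0 by (simp add: ones_count_snoc s_def)
    have ylow: "lowdeg y (d * s)" using lowdeg_shift[OF y xlow] .
    show ?thesis
      apply (rule exI[of _ g'], rule exI[of _ y])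
      apply (intro conjI allI)
         apply (rule g'low)
        apply (unfold oc d_def[symmetric], rule ylow)
       apply (rule pf')
      apply (simp only: gen st oc)
      done
  qed
qed

lemma main2:
  assumes m: "odd_poly m" and N: "N \<ge> 1" and ps: "length ps = N"
  shows "\<exists>g h. degree g < N \<and> (h = 0 \<or> degree h < degree m * ones_count ps)
     \<and> (\<forall>f. parity_prefix m N f = ps \<longleftrightarrow> (\<exists>q. f = g + tt ^ N * q))
     \<and> (\<forall>q. (mxT m ^^ N) (g + tt ^ N * q) = h + m ^ ones_count ps * q)"
proof -
  obtain g h where "lowdeg g N" "lowdeg h (degree m * ones_count ps)"
     "\<forall>f. parity_prefix m N f = ps \<longleftrightarrow> (\<exists>q. f = g + tt ^ N * q)"
     "\<forall>q. (mxT m ^^ N) (g + tt ^ N * q) = h + m ^ ones_count ps * q"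
    using main[OF m ps] by blast
  moreover have "degree g < N" using \<open>lowdeg g N\<close> N by (auto simp: lowdeg_iff)
  moreover have "h = 0 \<or> degree h < degree m * ones_count ps"
    using \<open>lowdeg h _\<close> by (simp add: lowdeg_iff)
  ultimately show ?thesis by blast
qed

lemma len_prefix[simp]: "length (parity_prefix m N f) = N"
  by (simp add: parity_prefix_def)

lemma deg_ttN: "degree (tt ^ N) = N"
  using degree_linear_power[of "0::bit" N] by simp

theorem mainTheorem2:
  fixes m :: "bit poly" and N d :: nat
  assumes "odd_poly m" and "degree m = d" and "N \<ge> 1"
  shows "(\<forall>f g. [:0, 1:] ^ N dvd (f - g) \<longrightarrow> parity_prefix m N f = parity_prefix m N g)
    \<and> bij_betw (parity_prefix m N) {f. degree f < N} {ps. length ps = N}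
    \<and> (\<forall>ps. length ps = N \<longrightarrow>
          (\<exists>g h. degree g < N \<and> (h = 0 \<or> degree h < d * ones_count ps)
             \<and> (\<forall>f. parity_prefix m N f = ps \<longleftrightarrow> (\<exists>q. f = g + [:0, 1:] ^ N * q))
             \<and> (\<forall>q. (mxT m ^^ N) (g + [:0, 1:] ^ N * q) = h + m ^ ones_count ps * q)))
    \<and> map_pmf (parity_prefix m N) (pmf_of_set {f. degree f < N}) = pmf_of_set {ps. length ps = N}"
proof -
  note M = main2[OF assms(1) assms(3)]
  have P1: "\<forall>f g. tt ^ N dvd (f - g) \<longrightarrow> parity_prefix m N f = parity_prefix m N g"
  proof (intro allI impI)
    fix f g :: "bit poly"
    assume "tt ^ N dvd (f - g)"
    then obtain k where k: "f - g = tt ^ N * k" by (auto elim: dvdE)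
    obtain G H where GH: "\<forall>f'. parity_prefix m N f' = parity_prefix m N f \<longleftrightarrow> (\<exists>q. f' = G + tt ^ N * q)"
      using M[of "parity_prefix m N f"] by auto
    then obtain q where q: "f = G + tt ^ N * q" by blast
    have "g = G + tt ^ N * (q - k)" using q k by (simp add: algebra_simps)
    then have "parity_prefix m N g = parity_prefix m N f" using GH by blast
    then show "parity_prefix m N f = parity_prefix m N g" by simp
  qed
  have inj: "inj_on (parity_prefix m N) {f. degree f < N}"
  proof (rule inj_onI)
    fix f1 f2 :: "bit poly"
    assume f1: "f1 \<in> {f. degree f < N}" and f2: "f2 \<in> {f. degree f < N}"
      and eq: "parity_prefix m N f1 = parity_prefix m N f2"
    obtain G H where GH: "\<forall>f'. parity_prefix m N f' = parity_prefix m N f1 \<longleftrightarrow> (\<exists>q. f' = G + tt ^ N * q)"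
      using M[of "parity_prefix m N f1"] by auto
    obtain q1 where q1: "f1 = G + tt ^ N * q1" using GH by blast
    obtain q2 where q2: "f2 = G + tt ^ N * q2" using GH eq by metis
    have d: "f1 - f2 = tt ^ N * (q1 - q2)" using q1 q2 by (simp add: algebra_simps)
    show "f1 = f2"
    proof (rule ccontr)
      assume "f1 \<noteq> f2"
      then have "q1 - q2 \<noteq> 0" using d by auto
      then have "degree (f1 - f2) = N + degree (q1 - q2)"
        unfolding d by (subst degree_mult_eq) (simp_all add: deg_ttN)
      moreover have "degree (f1 - f2) \<le> max (degree f1) (degree f2)"
        by (rule degree_diff_le_max)
      ultimately show False using f1 f2 by simp
    qed
  qed
  have img: "parity_prefix m N ` {f. degree f < N} = {ps. length ps = N}"
  proof
    show "parity_prefix m N ` {f. degree f < N} \<subseteq> {ps. length ps = N}" by auto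
  next
    show "{ps. length ps = N} \<subseteq> parity_prefix m N ` {f. degree f < N}"
    proof
      fix ps :: "bit list" assume "ps \<in> {ps. length ps = N}"
      then obtain G H where "degree G < N" "\<forall>f. parity_prefix m N f = ps \<longleftrightarrow> (\<exists>q. f = G + tt ^ N * q)"
        using M[of ps] by auto
      moreover have "G = G + tt ^ N * 0" by simp
      ultimately have "parity_prefix m N G = ps" by blast
      then show "ps \<in> parity_prefix m N ` {f. degree f < N}" using \<open>degree G < N\<close> by blast
    qed
  qed
  have bij: "bij_betw (parity_prefix m N) {f. degree f < N} {ps. length ps = N}"
    using inj img by (simp add: bij_betw_def)
  have U: "(UNIV :: bit set) = {0, 1}" by auto
  have fU: "finite (UNIV :: bit set)" by (simp add: U)
  have finB: "finite {ps :: bit list. length ps = N}"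
    using finite_lists_length_eq[of "UNIV :: bit set" N] fU by simp
  have finA: "finite {f :: bit poly. degree f < N}"
    using bij_betw_finite[OF bij] finB by simp
  have ne: "{f :: bit poly. degree f < N} \<noteq> {}" using assms(3)
    by (auto intro!: exI[of _ 0])
  have P4: "map_pmf (parity_prefix m N) (pmf_of_set {f. degree f < N}) = pmf_of_set {ps. length ps = N}"
    using map_pmf_of_set_inj[OF inj ne finA] img by simp
  show ?thesis
    using P1 bij P4 M assms(2) by blast
qed

end
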